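(* Let $r\ge1$ be an integer and $g\in C^\infty[a,b]$ with $g(a)=0$, $g^{(j)}(a)=0$ for $j=1,\dots,r$, and $g^{(r+1)}(x)\ne0$ for all $x\in[a,b]$. For integers $k\ge0$ define $\widehat\varphi_k(x)=g'(x)g(x)^{\frac{k-r}{r+1}}$ if $g^{(r+1)}>0$ on $[a,b]$, and $\widehat\varphi_k(x)=g'(x)(-g(x))^{\frac{k-r}{r+1}}$ if $g^{(r+1)}<0$ on $[a,b]$ (with values at $x=a$ by continuous extension). For $n\ge1$, the space $\widehat{\mathcal{E}}=\{v=\sum_{k=0}^{n-1}c_k\widehat\varphi_k:c_k\in\mathbb{R}\}$ is an extended Chebyshev space on $[a,b]$.
   Context: An extended Chebyshev space on $[a,b]$ is an $n$-dimensional linear space of sufficiently smooth functions on $[a,b]$ in which every nonzero element has at most $n-1$ zeros in $[a,b]$ counted with multiplicity (equivalently, every Hermite interpolation problem with $n$ conditions at points of $[a,b]$ has a unique solution in the space). Real powers of positive numbers are the positive real ones. *)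

theory Defs
  imports Complex_Main
begin

definition hderivs :: "real \<Rightarrow> real \<Rightarrow> (real \<Rightarrow> real) \<Rightarrow> (nat \<Rightarrow> real \<Rightarrow> real) \<Rightarrow> bool" where
  "hderivs a b f D \<longleftrightarrow> (\<forall>x\<in>{a..b}. D 0 x = f x) \<and>
     (\<forall>j. \<forall>x\<in>{a..b}. (D j has_real_derivative D (Suc j) x) (at x within {a..b}))"

definition smooth_on_interval :: "real \<Rightarrow> real \<Rightarrow> (real \<Rightarrow> real) \<Rightarrow> bool" where
  "smooth_on_interval a b f \<longleftrightarrow> (\<exists>D. hderivs a b f D)"

definition zero_of_mult :: "real \<Rightarrow> real \<Rightarrow> (real \<Rightarrow> real) \<Rightarrow> real \<Rightarrow> nat \<Rightarrow> bool" where
  "zero_of_mult a b f z m \<longleftrightarrow> z \<in> {a..b} \<and> (\<exists>D. hderivs a b f D \<and> (\<forall>j<m. D j z = 0))"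

definition ext_chebyshev_span :: "real \<Rightarrow> real \<Rightarrow> nat \<Rightarrow> (nat \<Rightarrow> real \<Rightarrow> real) \<Rightarrow> bool" where
  "ext_chebyshev_span a b n phi \<longleftrightarrow>
     (\<forall>k<n. smooth_on_interval a b (phi k)) \<and>
     (\<forall>c. (\<forall>x\<in>{a..b}. (\<Sum>k<n. c k * phi k x) = 0) \<longrightarrow> (\<forall>k<n. c k = 0)) \<and>
     (\<forall>c Z m. (\<exists>x\<in>{a..b}. (\<Sum>k<n. c k * phi k x) \<noteq> 0) \<and> finite Z \<and> Z \<subseteq> {a..b} \<and>
        (\<forall>z\<in>Z. zero_of_mult a b (\<lambda>x. \<Sum>k<n. c k * phi k x) z (m z))
        \<longrightarrow> sum m Z \<le> n - 1)"

definition phi_hat :: "real \<Rightarrow> real \<Rightarrow> (real \<Rightarrow> real) \<Rightarrow> (nat \<Rightarrow> real \<Rightarrow> real) \<Rightarrow> nat \<Rightarrow> nat \<Rightarrow> real \<Rightarrow> real" where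
  "phi_hat a b g D r k =
     (let e = (real k - real r) / (real r + 1);
          s = (if \<forall>x\<in>{a..b}. D (Suc r) x > 0 then (1::real) else -1);
          f = (\<lambda>x. D 1 x * (s * g x) powr e)
      in (\<lambda>x. if x = a then Lim (at_right a) f else f x))"

end

theory Submission imports Defs "HOL-Analysis.Analysis" "HOL-Computational_Algebra.Polynomial"
begin

lemma hderivs_cong:
  "hderivs a b f D \<Longrightarrow> (\<forall>x\<in>{a..b}. f x = g x) \<Longrightarrow> hderivs a b g D"
  unfolding hderivs_def by auto

lemma hderivs_shift:
  "hderivs a b f D \<Longrightarrow> hderivs a b (D 1) (\<lambda>j. D (Suc j))"
  unfolding hderivs_def by auto


lemma deriv_unique:
  fixes a b :: real
  assumes ab: "a < b" and x: "x \<in> {a..b}"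
    and d1: "(f has_real_derivative d1) (at x within {a..b})"
    and d2: "(g has_real_derivative d2) (at x within {a..b})"
    and eq: "\<forall>y\<in>{a..b}. f y = g y"
  shows "d1 = d2"
proof -
  have "(g has_derivative (*) d1) (at x within {a..b})"
    using d1 unfolding has_field_derivative_def
    by (intro has_derivative_transform[OF x, of g f]) (use eq in auto)
  then have h1: "(g has_derivative (*) d1) (at x within cbox a b)"
    by (simp add: cbox_interval)
  have h2: "(g has_derivative (*) d2) (at x within cbox a b)"
    using d2 by (simp add: has_field_derivative_def cbox_interval)
  have b: "\<And>i. i\<in>Basis \<Longrightarrow> a\<bullet>i < b\<bullet>i" using ab by simp
  have x': "x \<in> cbox a b" using x by (simp add: cbox_interval)
  have "(*) d1 = (*) d2"
    by (rule frechet_derivative_unique_within_closed_interval[OF b x' h1 h2])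
  then have "d1 * 1 = d2 * 1" by metis
  then show ?thesis by simp
qed

lemma hderivs_unique:
  fixes a b :: real
  assumes "a < b" "hderivs a b f D1" "hderivs a b g D2" "\<forall>x\<in>{a..b}. f x = g x"
  shows "\<forall>x\<in>{a..b}. D1 j x = D2 j x"
proof (induction j)
  case 0
  then show ?case using assms unfolding hderivs_def by auto
next
  case (Suc j)
  show ?case
  proof
    fix x assume x: "x \<in> {a..b}"
    have "(D1 j has_real_derivative D1 (Suc j) x) (at x within {a..b})"
      "(D2 j has_real_derivative D2 (Suc j) x) (at x within {a..b})"
      using assms x unfolding hderivs_def by auto
    then show "D1 (Suc j) x = D2 (Suc j) x"
      using deriv_unique[OF assms(1) x] Suc by blast
  qed
qed

lemma hderivs_cont:
  "hderivs a b f D \<Longrightarrow> continuous_on {a..b} (D j)"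
  unfolding hderivs_def continuous_on_eq_continuous_within
  using DERIV_continuous by blast


inductive_set alg :: "(real \<Rightarrow> real) set \<Rightarrow> (real \<Rightarrow> real) set" for B where
  alg_base: "f \<in> B \<Longrightarrow> f \<in> alg B"
| alg_const: "(\<lambda>x. c) \<in> alg B"
| alg_add: "f \<in> alg B \<Longrightarrow> g \<in> alg B \<Longrightarrow> (\<lambda>x. f x + g x) \<in> alg B"
| alg_mult: "f \<in> alg B \<Longrightarrow> g \<in> alg B \<Longrightarrow> (\<lambda>x. f x * g x) \<in> alg B"

lemma alg_deriv:
  assumes B: "\<forall>f\<in>B. \<exists>f'\<in>alg B. \<forall>x\<in>{a..b}. (f has_real_derivative f' x) (at x within {a..b})"
    and p: "p \<in> alg B"
  shows "\<exists>p'\<in>alg B. \<forall>x\<in>{a..b}. (p has_real_derivative p' x) (at x within {a..b})"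
  using p
proof (induction rule: alg.induct)
  case (alg_base f)
  then show ?case using B by blast
next
  case (alg_const c)
  show ?case
    by (rule bexI[of _ "\<lambda>x. 0"]) (auto intro: DERIV_const alg.alg_const)
next
  case (alg_add f g)
  then obtain f' g' where "f'\<in>alg B" "g'\<in>alg B"
    and f': "\<forall>x\<in>{a..b}. (f has_real_derivative f' x) (at x within {a..b})"
    and g': "\<forall>x\<in>{a..b}. (g has_real_derivative g' x) (at x within {a..b})" by blast
  show ?case
    apply (rule bexI[of _ "\<lambda>x. f' x + g' x"])
     apply (use f' g' in \<open>blast intro: DERIV_add\<close>)
    by (rule alg.alg_add) fact+
next
  case (alg_mult f g)
  then obtain f' g' where "f'\<in>alg B" "g'\<in>alg B" "f \<in> alg B" "g \<in> alg B"
    and f': "\<forall>x\<in>{a..b}. (f has_real_derivative f' x) (at x within {a..b})"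
    and g': "\<forall>x\<in>{a..b}. (g has_real_derivative g' x) (at x within {a..b})" by blast
  show ?case
    apply (rule bexI[of _ "\<lambda>x. f' x * g x + g' x * f x"])
     apply (use f' g' in \<open>blast intro: DERIV_mult\<close>)
    by (intro alg.alg_add alg.alg_mult) fact+
qed

lemma dclosed_smooth:
  assumes S: "\<forall>p\<in>S. \<exists>p'\<in>S. \<forall>x\<in>{a..b}. (p has_real_derivative p' x) (at x within {a..b})"
    and p: "p \<in> S"
  shows "\<exists>D. hderivs a b p D"
proof -
  from S obtain d where d: "\<forall>p\<in>S. d p \<in> S \<and> (\<forall>x\<in>{a..b}. (p has_real_derivative d p x) (at x within {a..b}))"
    by metis
  have inS: "(d ^^ j) p \<in> S" for j
    by (induction j) (use p d in auto)
  have "hderivs a b p (\<lambda>j. (d ^^ j) p)"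
    unfolding hderivs_def using d inS by simp
  then show ?thesis by blast
qed

lemma alg_smooth:
  assumes B: "\<forall>f\<in>B. \<exists>f'\<in>alg B. \<forall>x\<in>{a..b}. (f has_real_derivative f' x) (at x within {a..b})"
    and p: "p \<in> alg B" and eq: "\<forall>x\<in>{a..b}. f x = p x"
  shows "\<exists>D. hderivs a b f D"
proof -
  have "\<forall>p\<in>alg B. \<exists>p'\<in>alg B. \<forall>x\<in>{a..b}. (p has_real_derivative p' x) (at x within {a..b})"
    using alg_deriv[OF B] by blast
  from dclosed_smooth[OF this p] obtain D where "hderivs a b p D" by blast
  then have "hderivs a b f D" by (rule hderivs_cong) (use eq in auto)
  then show ?thesis by blast
qed

lemma sys_closed:
  assumes "hderivs a b f Df" "range Df \<subseteq> B"
  shows "\<forall>h\<in>range Df. \<exists>h'\<in>alg B. \<forall>x\<in>{a..b}. (h has_real_derivative h' x) (at x within {a..b})"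
proof
  fix h assume "h \<in> range Df"
  then obtain j where j: "h = Df j" by blast
  show "\<exists>h'\<in>alg B. \<forall>x\<in>{a..b}. (h has_real_derivative h' x) (at x within {a..b})"
    by (rule bexI[of _ "Df (Suc j)"]) (use assms j in \<open>auto simp: hderivs_def intro: alg_base\<close>)
qed

lemma sm_mult:
  assumes "hderivs a b f Df" "hderivs a b g Dg"
  shows "\<exists>D. hderivs a b (\<lambda>x. f x * g x) D"
proof (rule alg_smooth)
  let ?B = "range Df \<union> range Dg"
  show "\<forall>h\<in>?B. \<exists>h'\<in>alg ?B. \<forall>x\<in>{a..b}. (h has_real_derivative h' x) (at x within {a..b})"
    using sys_closed[OF assms(1), of ?B] sys_closed[OF assms(2), of ?B] by blast
  show "(\<lambda>x. Df 0 x * Dg 0 x) \<in> alg ?B" by (intro alg_mult alg_base) auto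
  show "\<forall>x\<in>{a..b}. f x * g x = Df 0 x * Dg 0 x" using assms by (simp add: hderivs_def)
qed

lemma sm_add:
  assumes "hderivs a b f Df" "hderivs a b g Dg"
  shows "hderivs a b (\<lambda>x. f x + g x) (\<lambda>j x. Df j x + Dg j x)"
  using assms unfolding hderivs_def by (auto intro: DERIV_add)

lemma sm_const: "hderivs a b (\<lambda>x. c) (\<lambda>j x. if j = 0 then c else 0)"
  unfolding hderivs_def by (auto intro: DERIV_const)

lemma sm_id: "hderivs a b (\<lambda>x. x) (\<lambda>j x. if j = 0 then x else if j = 1 then 1 else 0)"
  unfolding hderivs_def by (auto intro: DERIV_const DERIV_ident)

lemma sm_powr:
  assumes f: "hderivs a b f Df" and pos: "\<forall>x\<in>{a..b}. f x > 0"
  shows "\<exists>D. hderivs a b (\<lambda>x. f x powr \<beta>) D"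
proof (rule alg_smooth)
  let ?P = "range (\<lambda>k::nat. (\<lambda>x. Df 0 x powr (\<beta> - real k)))"
  let ?B = "range Df \<union> ?P"
  have "\<forall>h\<in>?P. \<exists>h'\<in>alg ?B. \<forall>x\<in>{a..b}. (h has_real_derivative h' x) (at x within {a..b})"
  proof
    fix h assume "h \<in> ?P"
    then obtain k where k: "h = (\<lambda>x. Df 0 x powr (\<beta> - real k))" by blast
    let ?h' = "\<lambda>x. (\<lambda>x. (\<beta> - real k) * Df 1 x) x * (\<lambda>x. Df 0 x powr (\<beta> - real (Suc k))) x"
    have "?h' \<in> alg ?B"
      by (intro alg_mult alg_const alg_base UnI2 UnI1 rangeI)
    moreover have "\<forall>x\<in>{a..b}. (h has_real_derivative ?h' x) (at x within {a..b})"
    proof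
      fix x assume x: "x \<in> {a..b}"
      have d: "(Df 0 has_real_derivative Df 1 x) (at x within {a..b})"
        using f x by (simp add: hderivs_def)
      have p: "Df 0 x > 0" using f pos x by (simp add: hderivs_def)
      have D: "((\<lambda>x. Df 0 x powr (\<beta> - real k)) has_real_derivative
          (\<beta> - real k) * Df 0 x powr (\<beta> - real k - of_nat 1) * Df 1 x) (at x within {a..b})"
        using DERIV_chain'[OF d has_real_derivative_powr[OF p, of "\<beta> - real k"]] by simp
      have E: "(\<beta> - real k) * Df 0 x powr (\<beta> - real k - of_nat 1) * Df 1 x = ?h' x"
        by (simp add: algebra_simps)
      show "(h has_real_derivative ?h' x) (at x within {a..b})" unfolding k by (rule D[unfolded E])
    qed
    ultimately show "\<exists>h'\<in>alg ?B. \<forall>x\<in>{a..b}. (h has_real_derivative h' x) (at x within {a..b})"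
      by (intro bexI[of _ "?h'"]) (assumption+)
  qed
  then show "\<forall>h\<in>?B. \<exists>h'\<in>alg ?B. \<forall>x\<in>{a..b}. (h has_real_derivative h' x) (at x within {a..b})"
    using sys_closed[OF f, of ?B] by blast
  show "(\<lambda>x. Df 0 x powr (\<beta> - real 0)) \<in> alg ?B" by (intro alg_base UnI2 rangeI)
  show "\<forall>x\<in>{a..b}. f x powr \<beta> = Df 0 x powr (\<beta> - real 0)" using f by (simp add: hderivs_def)
qed

lemma sm_poly:
  assumes "hderivs a b u Du"
  shows "\<exists>D. hderivs a b (\<lambda>x. poly P (u x)) D"
proof (induction P)
  case 0
  then show ?case using sm_const[of a b 0] by auto
next
  case (pCons c p)
  then obtain D where D: "hderivs a b (\<lambda>x. poly p (u x)) D" by blast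
  obtain D2 where "hderivs a b (\<lambda>x. u x * poly p (u x)) D2" using sm_mult[OF assms D] by blast
  from sm_add[OF sm_const this] show ?case by auto
qed


lemma chain_within:
  assumes "(\<phi> has_real_derivative d) (at (g x) within I)" "g ` S \<subseteq> I"
    "(g has_real_derivative e) (at x within S)"
  shows "((\<lambda>x. \<phi> (g x)) has_real_derivative d * e) (at x within S)"
proof -
  have "(\<phi> has_real_derivative d) (at (g x) within g ` S)"
    by (rule DERIV_subset[OF assms(1,2)])
  from DERIV_image_chain[OF this assms(3)] show ?thesis by (simp add: o_def)
qed

lemma lin_img:
  fixes a b x t :: real
  assumes "x \<in> {a..b}" "t \<in> {0..1}"
  shows "a + t * (x - a) \<in> {a..b}"
proof -
  have "t * (x - a) \<le> 1 * (x - a)" by (rule mult_right_mono) (use assms in auto)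
  moreover have "0 \<le> t * (x - a)" using assms by auto
  ultimately show ?thesis using assms by auto
qed

definition K :: "real \<Rightarrow> (real \<Rightarrow> real) \<Rightarrow> nat \<Rightarrow> real \<Rightarrow> real" where
  "K a \<phi> m x = integral (cbox 0 1) (\<lambda>t. t ^ m * \<phi> (a + t * (x - a)))"

lemma K_deriv:
  fixes a b :: real
  assumes ab: "a < b" and hd: "hderivs a b \<phi> D" and x0: "x0 \<in> {a..b}"
  shows "(K a (D j) j has_real_derivative K a (D (Suc j)) (Suc j) x0) (at x0 within {a..b})"
proof -
  let ?f = "\<lambda>x t. t ^ j * D j (a + t * (x - a))"
  let ?fx = "\<lambda>x t. t ^ Suc j * D (Suc j) (a + t * (x - a))"
  have "((\<lambda>x. integral (cbox 0 1) (?f x)) has_field_derivative integral (cbox 0 1) (?fx x0))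
      (at x0 within {a..b})"
  proof (rule leibniz_rule_field_derivative)
    fix x t assume x: "x \<in> {a..b}" and t: "t \<in> cbox (0::real) 1"
    have t': "t \<in> {0..1}" using t by (simp add: cbox_interval)
    have img: "(\<lambda>x. a + t * (x - a)) ` {a..b} \<subseteq> {a..b}" using lin_img t' by auto
    have dD: "(D j has_real_derivative D (Suc j) (a + t * (x - a))) (at (a + t * (x - a)) within {a..b})"
      using hd lin_img[OF x t'] by (simp add: hderivs_def)
    have dl: "((\<lambda>x. a + t * (x - a)) has_real_derivative t) (at x within {a..b})"
      by (auto intro!: derivative_eq_intros)
    have "((\<lambda>x. D j (a + t * (x - a))) has_real_derivative D (Suc j) (a + t * (x - a)) * t) (at x within {a..b})"
      by (rule chain_within[OF dD img dl])
    then have "((\<lambda>x. t ^ j * D j (a + t * (x - a))) has_real_derivative t ^ j * (D (Suc j) (a + t * (x - a)) * t)) (at x within {a..b})"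
      by (rule DERIV_cmult)
    then show "((\<lambda>x. ?f x t) has_real_derivative ?fx x t) (at x within {a..b})"
      by (simp add: algebra_simps)
  next
    fix x assume x: "x \<in> {a..b}"
    have c1: "continuous_on {0..1} (\<lambda>t. a + t * (x - a))" by (intro continuous_intros)
    have i1: "(\<lambda>t. a + t * (x - a)) ` {0..1} \<subseteq> {a..b}" using lin_img[OF x] by blast
    have "continuous_on {0..1} (\<lambda>t. D j (a + t * (x - a)))"
      by (rule continuous_on_compose2[OF hderivs_cont[OF hd] c1 i1])
    then have "continuous_on (cbox 0 1) (?f x)"
      by (auto intro!: continuous_intros simp: cbox_interval)
    then show "?f x integrable_on cbox 0 1" by (rule integrable_continuous)
  next
    have c2: "continuous_on ({a..b} \<times> cbox 0 1) (\<lambda>p. a + snd p * (fst p - a))"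
      by (intro continuous_intros)
    have i2: "(\<lambda>p. a + snd p * (fst p - a)) ` ({a..b} \<times> cbox 0 1) \<subseteq> {a..b}"
      using lin_img by (force simp: cbox_interval)
    have "continuous_on ({a..b} \<times> cbox 0 1) (\<lambda>p. D (Suc j) (a + snd p * (fst p - a)))"
      by (rule continuous_on_compose2[OF hderivs_cont[OF hd] c2 i2])
    then show "continuous_on ({a..b} \<times> cbox 0 1) (\<lambda>(x, t). ?fx x t)"
      by (auto intro!: continuous_intros simp: split_beta)
  qed (use x0 in auto)
  then show ?thesis unfolding K_def by simp
qed

lemma K_hderivs:
  fixes a b :: real
  assumes ab: "a < b" and hd: "hderivs a b \<phi> D"
  shows "hderivs a b (K a (D 0) 0) (\<lambda>j. K a (D j) j)"
  unfolding hderivs_def using K_deriv[OF ab hd] by auto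

lemma K_at_a: "K a \<phi> m a = \<phi> a / (real m + 1)"
proof -
  let ?c = "\<phi> a / (real m + 1)"
  have "((\<lambda>t. t ^ m * \<phi> a) has_integral ((\<lambda>t. t ^ Suc m * ?c) 1 - (\<lambda>t. t ^ Suc m * ?c) 0)) {0..1}"
  proof (rule fundamental_theorem_of_calculus)
    fix t :: real assume "t \<in> {0..1}"
    have "((\<lambda>t. t ^ Suc m) has_real_derivative real (Suc m) * t ^ (Suc m - Suc 0)) (at t within {0..1})"
      by (rule DERIV_pow)
    then have "((\<lambda>t. t ^ Suc m * ?c) has_real_derivative real (Suc m) * t ^ (Suc m - Suc 0) * ?c) (at t within {0..1})"
      by (rule DERIV_cmult_right)
    moreover have "real (Suc m) * t ^ (Suc m - Suc 0) * ?c = t ^ m * \<phi> a"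
      by (simp add: field_simps)
    ultimately have "((\<lambda>t. t ^ Suc m * ?c) has_real_derivative t ^ m * \<phi> a) (at t within {0..1})"
      by simp
    then show "((\<lambda>t. t ^ Suc m * ?c) has_vector_derivative t ^ m * \<phi> a) (at t within {0..1})"
      by (simp add: has_real_derivative_iff_has_vector_derivative)
  qed simp
  then have "((\<lambda>t. t ^ m * \<phi> a) has_integral ?c) {0..1}" by simp
  then have I: "integral {0..1} (\<lambda>t. t ^ m * \<phi> a) = ?c" by (rule integral_unique)
  have "K a \<phi> m a = integral {0..1} (\<lambda>t. t ^ m * \<phi> a)" unfolding K_def cbox_interval by simp
  then show ?thesis using I by simp
qed

lemma K_div:
  fixes a b :: real
  assumes ab: "a < b" and hd: "hderivs a b \<phi> D" and x: "x \<in> {a..b}"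
  shows "\<phi> x = \<phi> a + (x - a) * K a (D 1) 0 x"
proof -
  let ?F = "\<lambda>t. D 0 (a + t * (x - a))"
  let ?F' = "\<lambda>t. D 1 (a + t * (x - a)) * (x - a)"
  have "(?F' has_integral (?F 1 - ?F 0)) {0..1}"
  proof (rule fundamental_theorem_of_calculus)
    fix t :: real assume t: "t \<in> {0..1}"
    have img: "(\<lambda>t. a + t * (x - a)) ` {0..1} \<subseteq> {a..b}" using lin_img x by auto
    have dD: "(D 0 has_real_derivative D 1 (a + t * (x - a))) (at (a + t * (x - a)) within {a..b})"
      using hd lin_img[OF x t] by (simp add: hderivs_def)
    have dl: "((\<lambda>t. a + t * (x - a)) has_real_derivative (x - a)) (at t within {0..1})"
      by (auto intro!: derivative_eq_intros)
    show "(?F has_vector_derivative ?F' t) (at t within {0..1})"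
      using chain_within[OF dD img dl] by (simp add: has_real_derivative_iff_has_vector_derivative)
  qed simp
  then have "integral {0..1} ?F' = ?F 1 - ?F 0" by (rule integral_unique)
  also have "\<dots> = \<phi> x - \<phi> a" using hd x ab by (simp add: hderivs_def)
  finally have "integral {0..1} ?F' = \<phi> x - \<phi> a" .
  moreover have "integral {0..1} ?F' = (x - a) * K a (D 1) 0 x"
    unfolding K_def cbox_interval by (simp add: mult.commute)
  ultimately show ?thesis by simp
qed


lemma hderivs_deriv0:
  assumes "hderivs a b f D" "x \<in> {a..b}"
  shows "(f has_real_derivative D 1 x) (at x within {a..b})"
proof -
  have "(D 0 has_derivative (*) (D 1 x)) (at x within {a..b})"
    using assms by (simp add: hderivs_def has_field_derivative_def)
  then have "(f has_derivative (*) (D 1 x)) (at x within {a..b})"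
    by (intro has_derivative_transform[OF assms(2), of f "D 0"]) (use assms in \<open>auto simp: hderivs_def\<close>)
  then show ?thesis by (simp add: has_field_derivative_def)
qed

definition vanish :: "real \<Rightarrow> real \<Rightarrow> (real \<Rightarrow> real) \<Rightarrow> real \<Rightarrow> nat \<Rightarrow> bool" where
  "vanish a b f z m \<longleftrightarrow> (\<exists>D. hderivs a b f D \<and> (\<forall>j<m. D j z = 0))"

lemma vanish_cong:
  "vanish a b f z m \<Longrightarrow> \<forall>x\<in>{a..b}. f x = g x \<Longrightarrow> vanish a b g z m"
  unfolding vanish_def using hderivs_cong by blast

lemma vanish_mono: "vanish a b f z m \<Longrightarrow> m' \<le> m \<Longrightarrow> vanish a b f z m'"
  unfolding vanish_def by auto

lemma vanish_add:
  assumes "vanish a b f z m" "vanish a b g z m"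
  shows "vanish a b (\<lambda>x. f x + g x) z m"
proof -
  obtain Df Dg where "hderivs a b f Df" "\<forall>j<m. Df j z = 0" "hderivs a b g Dg" "\<forall>j<m. Dg j z = 0"
    using assms unfolding vanish_def by blast
  then have "hderivs a b (\<lambda>x. f x + g x) (\<lambda>j x. Df j x + Dg j x) \<and> (\<forall>j<m. Df j z + Dg j z = 0)"
    using sm_add by simp
  then show ?thesis unfolding vanish_def by blast
qed

lemma vanish_Suc:
  fixes a b :: real
  assumes ab: "a < b" and z: "z \<in> {a..b}" and hd: "hderivs a b f Df"
  shows "vanish a b f z (Suc m) \<longleftrightarrow> f z = 0 \<and> vanish a b (Df 1) z m"
proof
  assume "vanish a b f z (Suc m)"
  then obtain E where E: "hderivs a b f E" "\<forall>j<Suc m. E j z = 0" unfolding vanish_def by blast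
  have u: "\<forall>j. E j z = Df j z" using hderivs_unique[OF ab E(1) hd] z by auto
  have "f z = 0" using E z unfolding hderivs_def by auto
  moreover have "\<forall>j<m. Df (Suc j) z = 0" using E(2) u by simp
  then have "vanish a b (Df 1) z m"
    unfolding vanish_def using hderivs_shift[OF hd] by blast
  ultimately show "f z = 0 \<and> vanish a b (Df 1) z m" by blast
next
  assume "f z = 0 \<and> vanish a b (Df 1) z m"
  then obtain E where E: "f z = 0" "hderivs a b (Df 1) E" "\<forall>j<m. E j z = 0" unfolding vanish_def by blast
  have u: "\<forall>j. Df (Suc j) z = E j z"
    using hderivs_unique[OF ab hderivs_shift[OF hd] E(2)] z by auto
  have "\<forall>j<Suc m. Df j z = 0"
  proof (intro allI impI)
    fix j assume j: "j < Suc m"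
    show "Df j z = 0"
    proof (cases j)
      case 0 then show ?thesis using hd z E(1) by (simp add: hderivs_def)
    next
      case (Suc i) then show ?thesis using u E(3) j by auto
    qed
  qed
  then show "vanish a b f z (Suc m)" unfolding vanish_def using hd by blast
qed

lemma vanish_mult:
  fixes a b :: real
  assumes ab: "a < b" and z: "z \<in> {a..b}"
  shows "vanish a b f z m \<Longrightarrow> hderivs a b h Dh \<Longrightarrow> vanish a b (\<lambda>x. f x * h x) z m"
proof (induction m arbitrary: f h Dh)
  case 0
  then obtain Df where "hderivs a b f Df" unfolding vanish_def by blast
  from sm_mult[OF this 0(2)] show ?case unfolding vanish_def by auto
next
  case (Suc m)
  then obtain Df where Df: "hderivs a b f Df" unfolding vanish_def by blast
  from Suc.prems(1) vanish_Suc[OF ab z Df] have fz: "f z = 0" and v1: "vanish a b (Df 1) z m" by auto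
  obtain Dp where Dp: "hderivs a b (\<lambda>x. f x * h x) Dp" using sm_mult[OF Df Suc.prems(2)] by blast
  have Dp1: "Dp 1 x = Df 1 x * h x + Dh 1 x * f x" if x: "x \<in> {a..b}" for x
  proof (rule deriv_unique[OF ab x])
    show "(Dp 0 has_real_derivative Dp 1 x) (at x within {a..b})" using Dp x by (simp add: hderivs_def)
    show "((\<lambda>x. f x * h x) has_real_derivative Df 1 x * h x + Dh 1 x * f x) (at x within {a..b})"
      by (rule DERIV_mult[OF hderivs_deriv0[OF Df x] hderivs_deriv0[OF Suc.prems(2) x]])
    show "\<forall>y\<in>{a..b}. Dp 0 y = f y * h y" using Dp by (simp add: hderivs_def)
  qed
  have hd0: "hderivs a b h Dh" by fact
  have A: "vanish a b (\<lambda>x. Df 1 x * h x) z m" by (rule Suc.IH[OF v1 hd0])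
  have B: "vanish a b (\<lambda>x. f x * Dh 1 x) z m"
    by (rule Suc.IH[OF vanish_mono[OF Suc.prems(1)] hderivs_shift[OF hd0]]) simp
  have "vanish a b (Dp 1) z m"
  proof (rule vanish_cong[OF vanish_add[OF A B]], intro ballI)
    fix x assume x: "x \<in> {a..b}"
    show "Df 1 x * h x + f x * Dh 1 x = Dp 1 x" using Dp1[OF x] by (simp add: mult.commute)
  qed
  then show ?case using vanish_Suc[OF ab z Dp] fz by simp
qed

lemma vanish_poly:
  fixes a b :: real
  assumes ab: "a < b" and z: "z \<in> {a..b}" and hu: "hderivs a b u Du"
    and pos: "\<forall>x\<in>{a..b}. Du 1 x > 0"
  shows "P \<noteq> 0 \<Longrightarrow> vanish a b (\<lambda>x. poly P (u x)) z m \<Longrightarrow> m \<le> order (u z) P"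
proof (induction m arbitrary: P)
  case 0
  then show ?case by simp
next
  case (Suc m)
  obtain Dw where Dw: "hderivs a b (\<lambda>x. poly P (u x)) Dw" using sm_poly[OF hu] by blast
  from Suc.prems(2) vanish_Suc[OF ab z Dw] have pz: "poly P (u z) = 0" and v1: "vanish a b (Dw 1) z m" by auto
  have Dw1: "Dw 1 x = poly (pderiv P) (u x) * Du 1 x" if x: "x \<in> {a..b}" for x
  proof (rule deriv_unique[OF ab x])
    show "(Dw 0 has_real_derivative Dw 1 x) (at x within {a..b})" using Dw x by (simp add: hderivs_def)
    show "((\<lambda>x. poly P (u x)) has_real_derivative poly (pderiv P) (u x) * Du 1 x) (at x within {a..b})"
      by (rule DERIV_chain'[OF hderivs_deriv0[OF hu x] poly_DERIV])
    show "\<forall>y\<in>{a..b}. Dw 0 y = poly P (u y)" using Dw by (simp add: hderivs_def)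
  qed
  obtain Dq where Dq: "hderivs a b (\<lambda>x. Du 1 x powr -1) Dq"
    using sm_powr[OF hderivs_shift[OF hu], of "-1"] pos by (auto simp: hderivs_def)
  have "vanish a b (\<lambda>x. Dw 1 x * Du 1 x powr -1) z m" by (rule vanish_mult[OF ab z v1 Dq])
  then have v2: "vanish a b (\<lambda>x. poly (pderiv P) (u x)) z m"
  proof (rule vanish_cong, intro ballI)
    fix x assume x: "x \<in> {a..b}"
    have "Du 1 x > 0" using pos x by auto
    then show "Dw 1 x * Du 1 x powr -1 = poly (pderiv P) (u x)"
      using Dw1[OF x] by (simp add: powr_minus powr_one)
  qed
  have np: "pderiv P \<noteq> 0"
  proof
    assume "pderiv P = 0"
    then obtain h where "P = [:h:]" using pderiv_iszero by blast
    then show False using pz Suc.prems(1) by simp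
  qed
  have "m \<le> order (u z) (pderiv P)" by (rule Suc.IH[OF np v2])
  moreover have "order (u z) P = Suc (order (u z) (pderiv P))"
    by (rule order_pderiv[OF Suc.prems(1) pz])
  ultimately show ?case by simp
qed

lemma hadamard_iter:
  fixes a b :: real
  assumes ab: "a < b" and hG: "hderivs a b G DG" and z: "\<forall>j\<le>r. DG j a = 0"
    and p: "DG (Suc r) a > 0"
  shows "i \<le> Suc r \<Longrightarrow> \<exists>H DH. hderivs a b H DH \<and> (\<forall>x\<in>{a..b}. G x = (x - a) ^ i * H x)
     \<and> (\<forall>j. j + i \<le> r \<longrightarrow> DH j a = 0) \<and> DH (Suc r - i) a > 0"
proof (induction i)
  case 0
  show ?case
    by (rule exI[of _ G], rule exI[of _ DG]) (use hG z p in auto)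
next
  case (Suc i)
  then obtain H DH where H: "hderivs a b H DH" "\<forall>x\<in>{a..b}. G x = (x - a) ^ i * H x"
    "\<forall>j. j + i \<le> r \<longrightarrow> DH j a = 0" "DH (Suc r - i) a > 0" by auto
  have a: "a \<in> {a..b}" using ab by auto
  have "DH 0 a = 0" using H(3) Suc.prems by simp
  then have Ha: "H a = 0" using H(1) a by (simp add: hderivs_def)
  let ?H = "K a (DH 1) 0"
  let ?DH = "\<lambda>j. K a (DH (Suc j)) j"
  have h1: "hderivs a b ?H ?DH" using K_hderivs[OF ab hderivs_shift[OF H(1)]] by simp
  have h2: "\<forall>x\<in>{a..b}. G x = (x - a) ^ Suc i * ?H x"
    using H(2) K_div[OF ab H(1)] Ha by simp
  have h3: "\<forall>j. j + Suc i \<le> r \<longrightarrow> ?DH j a = 0"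
    using H(3) by (simp add: K_at_a)
  have e: "Suc (r - i) = Suc r - i" using Suc.prems by simp
  have q: "DH (Suc (r - i)) a > 0" using H(4) e by simp
  have "?DH (Suc r - Suc i) a = DH (Suc (r - i)) a / (real (r - i) + 1)" by (simp add: K_at_a)
  then have h4: "?DH (Suc r - Suc i) a > 0" using q by simp
  show ?case using h1 h2 h3 h4 by blast
qed

lemma pos_step:
  fixes a b :: real
  assumes ab: "a < b" and d: "\<forall>x\<in>{a..b}. (f has_real_derivative f' x) (at x within {a..b})"
    and fa: "f a = 0" and p: "\<forall>x\<in>{a<..b}. f' x > 0"
  shows "\<forall>x\<in>{a<..b}. f x > 0"
proof
  fix x assume x: "x \<in> {a<..b}"
  have c: "continuous_on {a..b} f"
    unfolding continuous_on_eq_continuous_within using d DERIV_continuous by blast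
  have c2: "continuous_on {a..x} f" by (rule continuous_on_subset[OF c]) (use x in auto)
  have dd: "\<exists>z. (f has_real_derivative z) (at y) \<and> z > 0" if y: "a < y" "y < x" for y
  proof -
    have "(f has_real_derivative f' y) (at y within {a..b})" using d y x by auto
    moreover have "at y within {a..b} = at y" using y x by (intro at_within_Icc_at) auto
    ultimately show ?thesis using p y x by auto
  qed
  have "f a < f x"
    using DERIV_pos_imp_increasing_open[of a x f] x dd c2 by auto
  then show "f x > 0" using fa by simp
qed



lemma powlem:
  fixes y :: real assumes y: "0 < y"
  shows "y ^ r * (y ^ Suc r) powr ((real k - real r) / (real r + 1)) = y ^ k"
proof -
  have "y ^ Suc r = y powr real (Suc r)" by (rule powr_realpow[OF y, symmetric])
  then have "(y ^ Suc r) powr ((real k - real r) / (real r + 1)) = y powr (real (Suc r) * ((real k - real r) / (real r + 1)))"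
    by (simp add: powr_powr)
  also have "real (Suc r) * ((real k - real r) / (real r + 1)) = real k - real r"
    by (simp add: field_simps)
  finally have e: "(y ^ Suc r) powr ((real k - real r) / (real r + 1)) = y powr (real k - real r)" .
  have "y ^ r = y powr real r" by (rule powr_realpow[OF y, symmetric])
  then have "y ^ r * (y ^ Suc r) powr ((real k - real r) / (real r + 1)) = y powr real r * y powr (real k - real r)"
    using e by simp
  also have "\<dots> = y powr (real r + (real k - real r))" by (rule powr_add[symmetric])
  also have "\<dots> = y ^ k" using y by (simp add: powr_realpow)
  finally show ?thesis .
qed

lemma sign_const:
  fixes a b :: real and f :: "real \<Rightarrow> real"
  assumes c: "continuous_on {a..b} f" and nz: "\<forall>x\<in>{a..b}. f x \<noteq> 0"
    and x0: "x0 \<in> {a..b}" "f x0 < 0" and x1: "x1 \<in> {a..b}"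
  shows "f x1 < 0"
proof (rule ccontr)
  assume "\<not> f x1 < 0"
  then have f1: "f x1 \<ge> 0" by simp
  show False
  proof (cases "x0 \<le> x1")
    case True
    have "continuous_on {x0..x1} f" by (rule continuous_on_subset[OF c]) (use x0 x1 in auto)
    from IVT'[of f x0 0 x1, OF _ _ True this] x0 f1 obtain x where "x0 \<le> x" "x \<le> x1" "f x = 0" by auto
    then show False using nz x0 x1 by auto
  next
    case False
    then have le: "x1 \<le> x0" by simp
    have "continuous_on {x1..x0} f" by (rule continuous_on_subset[OF c]) (use x0 x1 in auto)
    from IVT2'[of f x0 0 x1, OF _ _ le this] x0 f1 obtain x where "x1 \<le> x" "x \<le> x0" "f x = 0" by auto
    then show False using nz x0 x1 by auto
  qed
qed

theorem lemma3p6: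
  fixes a b :: real and g :: "real \<Rightarrow> real" and D :: "nat \<Rightarrow> real \<Rightarrow> real" and r n :: nat
  assumes "a < b"
    and "r \<ge> 1"
    and "hderivs a b g D"
    and "g a = 0"
    and "\<forall>j\<in>{1..r}. D j a = 0"
    and "\<forall>x\<in>{a..b}. D (Suc r) x \<noteq> 0"
    and "n \<ge> 1"
  shows "ext_chebyshev_span a b n (phi_hat a b g D r)"
proof -
  have ab: "a < b" and hg: "hderivs a b g D" using assms by auto
  have aI: "a \<in> {a..b}" using ab by auto
  define s :: real where "s = (if \<forall>x\<in>{a..b}. D (Suc r) x > 0 then 1 else -1)"
  have s2: "s * s = 1" "s \<noteq> 0" by (simp_all add: s_def)
  have sD: "\<forall>x\<in>{a..b}. s * D (Suc r) x > 0"
  proof (cases "\<forall>x\<in>{a..b}. D (Suc r) x > 0")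
    case True then show ?thesis by (simp add: s_def)
  next
    case False
    then obtain x0 where x0: "x0 \<in> {a..b}" "D (Suc r) x0 < 0"
      using assms(6) by (meson linorder_neqE_linordered_idom)
    have "\<forall>x\<in>{a..b}. D (Suc r) x < 0"
      using sign_const[OF hderivs_cont[OF hg] assms(6) x0] by blast
    then show ?thesis using False by (simp add: s_def)
  qed
  define G where "G = (\<lambda>x. s * g x)"
  define DG where "DG = (\<lambda>j x. s * D j x)"
  have hG: "hderivs a b G DG"
    using hg unfolding hderivs_def G_def DG_def by (auto intro: DERIV_cmult)
  have DGz: "\<forall>j\<le>r. DG j a = 0"
  proof (intro allI impI)
    fix j assume j: "j \<le> r"
    show "DG j a = 0"
    proof (cases j)
      case 0 then show ?thesis using hg aI assms(4) by (simp add: DG_def hderivs_def)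
    next
      case (Suc i) then show ?thesis using assms(5) j by (simp add: DG_def)
    qed
  qed
  have DGr: "\<forall>x\<in>{a..b}. DG (Suc r) x > 0" using sD by (simp add: DG_def)
  have dDG: "\<forall>x\<in>{a..b}. (DG j has_real_derivative DG (Suc j) x) (at x within {a..b})" for j
    using hG by (simp add: hderivs_def)
  have posi: "i \<le> r \<Longrightarrow> \<forall>x\<in>{a<..b}. DG (r - i) x > 0" for i
  proof (induction i)
    case 0
    show ?case using pos_step[OF ab dDG[of r]] DGz DGr by auto
  next
    case (Suc i)
    have e: "Suc (r - Suc i) = r - i" using Suc.prems by simp
    have d: "\<forall>x\<in>{a..b}. (DG (r - Suc i) has_real_derivative DG (r - i) x) (at x within {a..b})"
      using dDG[of "r - Suc i"] e by simp
    show ?case using pos_step[OF ab d] DGz Suc by auto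
  qed
  have pos: "\<forall>x\<in>{a<..b}. DG j x > 0" if "j \<le> r" for j
    using posi[of "r - j"] that by simp
  have G0: "\<forall>x\<in>{a..b}. DG 0 x = G x" using hG by (simp add: hderivs_def)
  obtain H DH where H: "hderivs a b H DH" "\<forall>x\<in>{a..b}. G x = (x - a) ^ Suc r * H x"
    "DH 0 a > 0"
    using hadamard_iter[OF ab hG DGz, of "Suc r"] DGr aI by auto
  have H0: "\<forall>x\<in>{a..b}. DH 0 x = H x" using H(1) by (simp add: hderivs_def)
  have Hpos: "\<forall>x\<in>{a..b}. DH 0 x > 0"
  proof
    fix x assume x: "x \<in> {a..b}"
    show "DH 0 x > 0"
    proof (cases "x = a")
      case True then show ?thesis using H(3) by simp
    next
      case False
      then have xa: "x \<in> {a<..b}" using x by auto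
      have "0 < G x" using pos[of 0] xa G0 x by auto
      then have "0 < (x - a) ^ Suc r * H x" using H(2) x by simp
      moreover have "0 < (x - a) ^ Suc r" using xa by simp
      ultimately have "0 < H x" by (rule zero_less_mult_pos)
      then show ?thesis using H0 x by simp
    qed
  qed
  have hDH: "hderivs a b (DH 0) DH" using hderivs_cong[OF H(1)] H0 by simp
  define \<rho> :: real where "\<rho> = 1 / (real r + 1)"
  obtain DV where hV: "hderivs a b (\<lambda>x. DH 0 x powr \<rho>) DV" using sm_powr[OF hDH Hpos] by blast
  have DV0: "\<forall>x\<in>{a..b}. DV 0 x = DH 0 x powr \<rho>" using hV by (simp add: hderivs_def)
  have DV0p: "\<forall>x\<in>{a..b}. DV 0 x > 0" using DV0 Hpos by (simp add: less_imp_neq[symmetric])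
  have hDV: "hderivs a b (DV 0) DV" using hderivs_cong[OF hV] DV0 by simp
  define u where "u = (\<lambda>x. (x - a) * DV 0 x)"
  obtain Du where hu: "hderivs a b u Du"
  proof -
    from sm_mult[OF sm_add[OF sm_id[of a b] sm_const[of a b "- a"]] hDV] obtain E where "hderivs a b (\<lambda>x. (x + - a) * DV 0 x) E" by blast
    then have "hderivs a b u E" by (rule hderivs_cong) (simp add: u_def)
    then show ?thesis using that by blast
  qed
  have Du1: "Du 1 x = 1 * DV 0 x + DV 1 x * (x - a)" if x: "x \<in> {a..b}" for x
  proof (rule deriv_unique[OF ab x])
    show "(u has_real_derivative Du 1 x) (at x within {a..b})" by (rule hderivs_deriv0[OF hu x])
    have "((\<lambda>x. x - a) has_real_derivative 1) (at x within {a..b})"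
      by (auto intro!: derivative_eq_intros)
    from DERIV_mult[OF this hderivs_deriv0[OF hDV x]]
    show "(u has_real_derivative 1 * DV 0 x + DV 1 x * (x - a)) (at x within {a..b})"
      by (simp add: u_def)
  qed simp
  have uG: "\<forall>x\<in>{a..b}. u x ^ Suc r = G x"
  proof
    fix x assume x: "x \<in> {a..b}"
    have "DV 0 x ^ Suc r = DH 0 x powr (real (Suc r) * \<rho>)"
    proof -
      have "DH 0 x \<noteq> 0" using Hpos x by (simp add: less_imp_neq[symmetric])
      then have "(DH 0 x powr \<rho>) ^ Suc r = DH 0 x powr (real (Suc r) * \<rho>)"
        by (rule powr_power)
      then show ?thesis using DV0 x by simp
    qed
    also have "real (Suc r) * \<rho> = 1" by (simp add: \<rho>_def)
    moreover have hx: "0 < H x" using Hpos H0 x by auto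
    ultimately have "DV 0 x ^ Suc r = H x" using H0 x by (simp add: abs_of_pos)
    then show "u x ^ Suc r = G x" using H(2) x by (simp add: u_def power_mult_distrib)
  qed
  have upos: "\<forall>x\<in>{a<..b}. u x > 0" using DV0p by (simp add: u_def)
  have DG1: "DG 1 x = (1 + real r) * (Du 1 x * u x ^ r)" if x: "x \<in> {a..b}" for x
  proof (rule deriv_unique[OF ab x])
    show "(DG 0 has_real_derivative DG 1 x) (at x within {a..b})" using dDG x by simp
    show "((\<lambda>x. u x ^ Suc r) has_real_derivative (1 + real r) * (Du 1 x * u x ^ r)) (at x within {a..b})"
      by (rule DERIV_power_Suc[OF hderivs_deriv0[OF hu x]])
    show "\<forall>y\<in>{a..b}. DG 0 y = u y ^ Suc r" using G0 uG by simp
  qed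
  have Du1pos: "\<forall>x\<in>{a..b}. Du 1 x > 0"
  proof
    fix x assume x: "x \<in> {a..b}"
    show "Du 1 x > 0"
    proof (cases "x = a")
      case True then show ?thesis using Du1[OF aI] DV0p aI by simp
    next
      case False
      then have xa: "x \<in> {a<..b}" using x by auto
      have "0 < DG 1 x" using pos[of 1] assms(2) xa by auto
      then have "0 < (1 + real r) * (Du 1 x * u x ^ r)" using DG1[OF x] by simp
      then have "0 < Du 1 x * u x ^ r" by (simp add: zero_less_mult_iff)
      moreover have "0 < u x ^ r" using upos xa by simp
      ultimately show ?thesis by (rule zero_less_mult_pos2)
    qed
  qed
  have cu: "continuous_on {a..b} u"
  proof (rule continuous_on_cong[THEN iffD1, OF refl _ hderivs_cont[OF hu, of 0]])
    show "\<And>x. x \<in> {a..b} \<Longrightarrow> Du 0 x = u x" using hu by (simp add: hderivs_def)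
  qed
  have cDu1: "continuous_on {a..b} (Du 1)" by (rule hderivs_cont[OF hu])
  have umono: "u x < u y" if xy: "x \<in> {a..b}" "y \<in> {a..b}" "x < y" for x y
  proof -
    have c2: "continuous_on {x..y} u" by (rule continuous_on_subset[OF cu]) (use xy in auto)
    have dd: "\<exists>z. (u has_real_derivative z) (at t) \<and> z > 0" if t: "x < t" "t < y" for t
    proof -
      have tI: "t \<in> {a..b}" using t xy by auto
      have "(u has_real_derivative Du 1 t) (at t within {a..b})" by (rule hderivs_deriv0[OF hu tI])
      moreover have "at t within {a..b} = at t" using t xy by (intro at_within_Icc_at) auto
      ultimately show ?thesis using Du1pos tI by auto
    qed
    show ?thesis using DERIV_pos_imp_increasing_open[of x y u] xy dd c2 by auto
  qed
  have uinj: "inj_on u {a..b}"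
  proof (rule inj_onI)
    fix x y assume "x \<in> {a..b}" "y \<in> {a..b}" "u x = u y"
    then show "x = y" using umono by (metis less_irrefl linorder_neqE_linordered_idom)
  qed
  define \<psi> where "\<psi> = (\<lambda>k x. s * (real r + 1) * u x ^ k * Du 1 x)"
  have phi_eq: "\<forall>x\<in>{a..b}. phi_hat a b g D r k x = \<psi> k x" for k
  proof -
    define e where "e = (real k - real r) / (real r + 1)"
    define F where "F = (\<lambda>x. D 1 x * (s * g x) powr e)"
    have ph: "phi_hat a b g D r k = (\<lambda>x. if x = a then Lim (at_right a) F else F x)"
      unfolding phi_hat_def Let_def s_def F_def e_def by simp
    have FI: "F x = \<psi> k x" if x: "x \<in> {a<..b}" for x
    proof -
      have xI: "x \<in> {a..b}" using x by auto
      have "s * g x = u x ^ Suc r" using uG xI by (simp add: G_def)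
      moreover have "D 1 x = s * DG 1 x" using s2 by (simp add: DG_def)
      ultimately have "F x = s * ((1 + real r) * (Du 1 x * u x ^ r)) * (u x ^ Suc r) powr e"
        using DG1[OF xI] by (simp add: F_def)
      also have "\<dots> = s * (1 + real r) * Du 1 x * (u x ^ r * (u x ^ Suc r) powr e)"
        by (simp add: mult_ac)
      also have "u x ^ r * (u x ^ Suc r) powr e = u x ^ k"
        unfolding e_def by (rule powlem) (use upos x in auto)
      finally show ?thesis by (simp add: \<psi>_def mult_ac)
    qed
    have cpsi: "continuous_on {a..b} (\<psi> k)"
      unfolding \<psi>_def by (intro continuous_intros cu cDu1)
    then have "(\<psi> k \<longlongrightarrow> \<psi> k a) (at a within {a..b})"
      using aI by (simp add: continuous_on_def)
    then have "(\<psi> k \<longlongrightarrow> \<psi> k a) (at_right a)" by (simp add: at_within_Icc_at_right[OF ab])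
    moreover have "eventually (\<lambda>x. \<psi> k x = F x) (at_right a)"
      using eventually_at_right_real[OF ab] by eventually_elim (use FI in auto)
    ultimately have "(F \<longlongrightarrow> \<psi> k a) (at_right a)" by (rule Lim_transform_eventually)
    then have "Lim (at_right a) F = \<psi> k a" by (rule tendsto_Lim[rotated]) simp
    then show ?thesis using FI ph by auto
  qed
  have psi_sm: "\<exists>E. hderivs a b (\<psi> k) E" for k
  proof -
    obtain E1 where "hderivs a b (\<lambda>x. poly (monom 1 k) (u x)) E1" using sm_poly[OF hu] by blast
    from sm_mult[OF sm_const this] obtain E2 where
      "hderivs a b (\<lambda>x. s * (real r + 1) * poly (monom 1 k) (u x)) E2" by blast
    from sm_mult[OF this hderivs_shift[OF hu]] obtain E3 where
      "hderivs a b (\<lambda>x. s * (real r + 1) * poly (monom 1 k) (u x) * Du 1 x) E3" by blast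
    then have "hderivs a b (\<psi> k) E3" by (rule hderivs_cong) (simp add: \<psi>_def poly_monom)
    then show ?thesis by blast
  qed
  define P where "P = (\<lambda>c::nat \<Rightarrow> real. \<Sum>k<n. monom (c k) k)"
  have sumeq: "\<forall>x\<in>{a..b}. (\<Sum>k<n. c k * phi_hat a b g D r k x) = s * (real r + 1) * Du 1 x * poly (P c) (u x)" for c
  proof
    fix x assume x: "x \<in> {a..b}"
    have "(\<Sum>k<n. c k * phi_hat a b g D r k x) = (\<Sum>k<n. (s * (real r + 1) * Du 1 x) * (c k * u x ^ k))"
      using phi_eq x by (simp add: \<psi>_def mult_ac)
    also have "\<dots> = s * (real r + 1) * Du 1 x * poly (P c) (u x)"
      by (simp add: P_def poly_sum poly_monom sum_distrib_left)
    finally show "(\<Sum>k<n. c k * phi_hat a b g D r k x) = s * (real r + 1) * Du 1 x * poly (P c) (u x)" .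
  qed
  have Cnz: "s * (real r + 1) * Du 1 x \<noteq> 0" if "x \<in> {a..b}" for x
  proof -
    have "Du 1 x > 0" using Du1pos that by blast
    then show ?thesis using s2 by simp
  qed
  have degP: "degree (P c) \<le> n - 1" for c
    unfolding P_def
  proof (rule degree_sum_le)
    show "finite {..<n}" by simp
    fix k assume "k \<in> {..<n}"
    then have "k \<le> n - 1" by auto
    then show "degree (monom (c k) k) \<le> n - 1" using degree_monom_le[of "c k" k] by linarith
  qed
  have coeffP: "coeff (P c) k = c k" if "k < n" for c k
    using that by (simp add: P_def coeff_sum)
  show ?thesis
    unfolding ext_chebyshev_span_def
  proof (intro conjI allI impI)
    fix k assume "k < n"
    obtain E where "hderivs a b (\<psi> k) E" using psi_sm by blast
    then have "hderivs a b (phi_hat a b g D r k) E" by (rule hderivs_cong) (use phi_eq in simp)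
    then show "smooth_on_interval a b (phi_hat a b g D r k)" unfolding smooth_on_interval_def by blast
  next
    fix c k assume hz: "\<forall>x\<in>{a..b}. (\<Sum>k<n. c k * phi_hat a b g D r k x) = 0" and k: "k < n"
    have pz: "\<forall>x\<in>{a..b}. poly (P c) (u x) = 0"
    proof
      fix x assume x: "x \<in> {a..b}"
      have e1: "(\<Sum>k<n. c k * phi_hat a b g D r k x) = 0" using hz x by blast
      have e2: "(\<Sum>k<n. c k * phi_hat a b g D r k x) = s * (real r + 1) * Du 1 x * poly (P c) (u x)"
        using sumeq x by blast
      have "s * (real r + 1) * Du 1 x * poly (P c) (u x) = 0" using e1 e2 by simp
      then show "poly (P c) (u x) = 0" using Cnz[OF x] by simp
    qed
    have "P c = 0"
    proof (rule ccontr)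
      assume "P c \<noteq> 0"
      then have "finite {y. poly (P c) y = 0}" by (rule poly_roots_finite)
      moreover have "u ` {a..b} \<subseteq> {y. poly (P c) y = 0}" using pz by auto
      ultimately have "finite (u ` {a..b})" by (rule finite_subset[rotated])
      then have "finite {a..b}" using finite_imageD uinj by blast
      then show False using infinite_Icc[OF ab] by simp
    qed
    then show "c k = 0" using coeffP[OF k, of c] by simp
  next
    fix c Z m
    assume A: "(\<exists>x\<in>{a..b}. (\<Sum>k<n. c k * phi_hat a b g D r k x) \<noteq> 0) \<and> finite Z \<and> Z \<subseteq> {a..b} \<and>
        (\<forall>z\<in>Z. zero_of_mult a b (\<lambda>x. \<Sum>k<n. c k * phi_hat a b g D r k x) z (m z))"
    then have fZ: "finite Z" and ZI: "Z \<subseteq> {a..b}" by auto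
    have Pnz: "P c \<noteq> 0"
    proof
      assume "P c = 0"
      then have "\<forall>x\<in>{a..b}. (\<Sum>k<n. c k * phi_hat a b g D r k x) = 0" using sumeq by simp
      then show False using A by blast
    qed
    obtain Dq where Dq: "hderivs a b (\<lambda>x. Du 1 x powr -1) Dq"
      using sm_powr[OF hderivs_shift[OF hu], of "-1"] Du1pos by (auto simp: hderivs_def)
    from sm_mult[OF sm_const Dq] obtain Dh where
      Dh: "hderivs a b (\<lambda>x. inverse (s * (real r + 1)) * Du 1 x powr -1) Dh" by blast
    have mz: "m z \<le> order (u z) (P c)" if z: "z \<in> Z" for z
    proof -
      have zI: "z \<in> {a..b}" and v: "vanish a b (\<lambda>x. \<Sum>k<n. c k * phi_hat a b g D r k x) z (m z)"
        using A z unfolding zero_of_mult_def vanish_def by auto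
      have "vanish a b (\<lambda>x. (\<Sum>k<n. c k * phi_hat a b g D r k x) * (inverse (s * (real r + 1)) * Du 1 x powr -1)) z (m z)"
        by (rule vanish_mult[OF ab zI v Dh])
      then have "vanish a b (\<lambda>x. poly (P c) (u x)) z (m z)"
      proof (rule vanish_cong, intro ballI)
        fix x assume x: "x \<in> {a..b}"
        have d: "Du 1 x > 0" using Du1pos x by auto
        show "(\<Sum>k<n. c k * phi_hat a b g D r k x) * (inverse (s * (real r + 1)) * Du 1 x powr -1) = poly (P c) (u x)"
        proof -
          have e: "(\<Sum>k<n. c k * phi_hat a b g D r k x) = s * (real r + 1) * Du 1 x * poly (P c) (u x)"
            using sumeq x by blast
          have dp: "Du 1 x powr -1 = 1 / Du 1 x" by (rule powr_neg_one[OF d])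
          have Cn: "s * (real r + 1) * Du 1 x \<noteq> 0" by (rule Cnz[OF x])
          have iv: "inverse (s * (real r + 1)) * (1 / Du 1 x) = inverse (s * (real r + 1) * Du 1 x)"
            by (simp add: inverse_mult_distrib divide_inverse)
          have "s * (real r + 1) * Du 1 x * poly (P c) (u x) * inverse (s * (real r + 1) * Du 1 x)
              = poly (P c) (u x) * ((s * (real r + 1) * Du 1 x) * inverse (s * (real r + 1) * Du 1 x))"
            by (simp only: mult_ac)
          also have "\<dots> = poly (P c) (u x)" using right_inverse[OF Cn] by (simp only: mult_1_right)
          finally show ?thesis unfolding e dp iv .
        qed
      qed
      then show ?thesis by (rule vanish_poly[OF ab zI hu Du1pos Pnz])
    qed
    let ?R = "{y. poly (P c) y = 0}"
    have fR: "finite ?R" by (rule poly_roots_finite[OF Pnz])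
    have "sum m Z \<le> (\<Sum>z\<in>Z. order (u z) (P c))" by (rule sum_mono) (use mz in auto)
    also have "\<dots> = (\<Sum>y\<in>u ` Z. order y (P c))"
      using sum.reindex[OF inj_on_subset[OF uinj ZI], of "\<lambda>y. order y (P c)"] by simp
    also have "\<dots> \<le> (\<Sum>y\<in>u ` Z \<union> ?R. order y (P c))"
      by (rule sum_mono2) (use fZ fR in auto)
    also have "\<dots> = (\<Sum>y\<in>?R. order y (P c))"
    proof (rule sum.mono_neutral_left[symmetric])
      show "finite (u ` Z \<union> ?R)" using fZ fR by auto
      show "\<forall>i\<in>u ` Z \<union> ?R - ?R. order i (P c) = 0" using Pnz order_root by blast
    qed auto
    also have "\<dots> \<le> degree (P c)" by (rule sum_order_le_degree[OF Pnz])
    also have "\<dots> \<le> n - 1" by (rule degP)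
    finally show "sum m Z \<le> n - 1" .
  qed
qed

end
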